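(* Let $n\geq 1$ and let $p,q,t,x$ be indeterminates. Define $$A_n(p,q,t)=\sum_{\sigma\in\mathfrak{S}_n}p^{\mathsf{nest}\,\sigma}q^{\mathsf{cros}\,\sigma}t^{\mathsf{exc}\,\sigma}.$$ Then $$A_{n}(p, q, t)=\left(\frac{1+xt}{1+x}\right)^{n-1}P^{(\mathsf{nest}, \mathsf{cros},\mathsf{cpk}^*,\mathsf{exc})}\left(\mathfrak{S}_n; p, q, \frac{(1+x)^{2}t}{(x+t)(1+xt)},\frac{x+t}{1+xt}\right),$$ equivalently, $$P^{(\mathsf{nest}, \mathsf{cros}, \mathsf{cpk}^*,\mathsf{exc})}(\mathfrak{S}_n; p, q, x,t)=\left(\frac{1+u}{1+uv}\right)^{n-1}A_{n}(p, q, v),$$ where $u=\frac{1+t^{2}-2xt-(1-t)\sqrt{(1+t)^{2}-4xt}}{2(1-x)t}$ and $v=\frac{(1+t)^{2}-2xt-(1+t)\sqrt{(1+t)^{2}-4xt}}{2xt}$.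
   Context: $\mathfrak{S}_n$ is the set of permutations of $[n]=\{1,\dots,n\}$. For a finite set $\Omega$ of permutations and statistics $\mathsf{stat}_1,\dots,\mathsf{stat}_m$, $P^{(\mathsf{stat}_1,\ldots,\mathsf{stat}_m)}(\Omega;t_1,\ldots,t_m)=\sum_{\sigma\in\Omega}t_1^{\mathsf{stat}_1\sigma}\cdots t_m^{\mathsf{stat}_m\sigma}$. For $\sigma\in\mathfrak{S}_n$: $\mathsf{exc}\,\sigma=\#\{i:\sigma(i)>i\}$; for $i\in[n]$, $\mathsf{nest}_i\sigma=\#\{j: j<i<\sigma(i)<\sigma(j)\text{ or }\sigma(j)<\sigma(i)\le i<j\}$ and $\mathsf{cros}_i\sigma=\#\{j: j<i<\sigma(j)<\sigma(i)\text{ or }\sigma(i)<\sigma(j)\le i<j\}$; $\mathsf{nest}=\sum_i\mathsf{nest}_i$, $\mathsf{cros}=\sum_i\mathsf{cros}_i$. The star companion $\sigma^*$ is the permutation of $\{0,1,\dots,n\}$ with $\sigma^*(0)=n$ and $\sigma^*(i)=\sigma(i)-1$ for $i\in[n]$. Then $\mathsf{cpk}^*\sigma=\#\{i\in[n-1]:(\sigma^* )^{-1}(i)<i>\sigma^*(i)\}$. *)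

theory Defs
  imports "HOL-Combinatorics.Permutations"
begin

definition Sym :: "nat \<Rightarrow> (nat \<Rightarrow> nat) set" where
  "Sym n = {\<sigma>. \<sigma> permutes {1..n}}"

definition exc :: "nat \<Rightarrow> (nat \<Rightarrow> nat) \<Rightarrow> nat" where
  "exc n \<sigma> = card {i \<in> {1..n}. \<sigma> i > i}"

definition nest_i :: "nat \<Rightarrow> (nat \<Rightarrow> nat) \<Rightarrow> nat \<Rightarrow> nat" where
  "nest_i n \<sigma> i = card {j \<in> {1..n}.
      (j < i \<and> i < \<sigma> i \<and> \<sigma> i < \<sigma> j) \<or> (\<sigma> j < \<sigma> i \<and> \<sigma> i \<le> i \<and> i < j)}"

definition cros_i :: "nat \<Rightarrow> (nat \<Rightarrow> nat) \<Rightarrow> nat \<Rightarrow> nat" where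
  "cros_i n \<sigma> i = card {j \<in> {1..n}.
      (j < i \<and> i < \<sigma> j \<and> \<sigma> j < \<sigma> i) \<or> (\<sigma> i < \<sigma> j \<and> \<sigma> j \<le> i \<and> i < j)}"

definition nest :: "nat \<Rightarrow> (nat \<Rightarrow> nat) \<Rightarrow> nat" where
  "nest n \<sigma> = (\<Sum>i\<in>{1..n}. nest_i n \<sigma> i)"

definition cros :: "nat \<Rightarrow> (nat \<Rightarrow> nat) \<Rightarrow> nat" where
  "cros n \<sigma> = (\<Sum>i\<in>{1..n}. cros_i n \<sigma> i)"

definition star_comp :: "nat \<Rightarrow> (nat \<Rightarrow> nat) \<Rightarrow> nat \<Rightarrow> nat" where
  "star_comp n \<sigma> = (\<lambda>i. if i = 0 then n else \<sigma> i - 1)"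

definition cpk_star :: "nat \<Rightarrow> (nat \<Rightarrow> nat) \<Rightarrow> nat" where
  "cpk_star n \<sigma> = card {i \<in> {1..n-1}.
      inv_into {0..n} (star_comp n \<sigma>) i < i \<and> star_comp n \<sigma> i < i}"

definition A_poly :: "nat \<Rightarrow> 'a::comm_semiring_1 \<Rightarrow> 'a \<Rightarrow> 'a \<Rightarrow> 'a" where
  "A_poly n p q t = (\<Sum>\<sigma>\<in>Sym n. p ^ nest n \<sigma> * q ^ cros n \<sigma> * t ^ exc n \<sigma>)"

definition P_nest_cros_cpk_exc :: "nat \<Rightarrow> 'a::comm_semiring_1 \<Rightarrow> 'a \<Rightarrow> 'a \<Rightarrow> 'a \<Rightarrow> 'a" where
  "P_nest_cros_cpk_exc n t1 t2 t3 t4 =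
     (\<Sum>\<sigma>\<in>Sym n. t1 ^ nest n \<sigma> * t2 ^ cros n \<sigma> * t3 ^ cpk_star n \<sigma> * t4 ^ exc n \<sigma>)"

end

theory Submission
  imports Defs
begin

definition qint :: "'a::comm_ring_1 \<Rightarrow> 'a \<Rightarrow> nat \<Rightarrow> 'a" where
  "qint p q k = (\<Sum>i<k. p ^ i * q ^ (k - 1 - i))"

fun EE :: "'a::comm_ring_1 \<Rightarrow> 'a \<Rightarrow> 'a \<Rightarrow> 'a \<Rightarrow> nat \<Rightarrow> nat \<Rightarrow> 'a" where
  "EE p q s y 0 D = (if D = 0 then 1 else 0)"
| "EE p q s y (Suc m) D = (1 + y) * qint p q (D+1) * EE p q s y m D
     + (if D > 0 then y * EE p q s y m (D - 1) else 0)
     + s * qint p q (D+1) * qint p q (D+2) * EE p q s y m (D+1)"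

lemma EE_scale:
  fixes p q s y r t :: "'a::comm_ring_1"
  assumes h1: "s * y = r^2 * t" and h2: "1 + y = r * (1 + t)"
  shows "s ^ D * EE p q s y m D = r ^ (m + D) * EE p q 1 t m D"
proof (induction m arbitrary: D)
  case 0
  then show ?case by simp
next
  case (Suc m)
  have T1: "s^D * ((1 + y) * qint p q (D+1) * EE p q s y m D)
      = r^(Suc m + D) * ((1 + t) * qint p q (D+1) * EE p q 1 t m D)"
  proof -
    have "s^D * ((1 + y) * qint p q (D+1) * EE p q s y m D)
       = (1+y) * qint p q (D+1) * (s^D * EE p q s y m D)" by (simp add: algebra_simps)
    also have "\<dots> = r * (1 + t) * qint p q (D+1) * (r^(m+D) * EE p q 1 t m D)"
      using Suc h2 by simp
    finally show ?thesis by (simp add: algebra_simps)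
  qed
  have T2: "s^D * (if D > 0 then y * EE p q s y m (D - 1) else 0)
      = r^(Suc m + D) * (if D > 0 then t * EE p q 1 t m (D - 1) else 0)"
  proof (cases D)
    case 0 then show ?thesis by simp
  next
    case (Suc d)
    have "s^D * (y * EE p q s y m d) = (s*y) * (s^d * EE p q s y m d)"
      using Suc by (simp add: algebra_simps)
    also have "\<dots> = r^2 * t * (r^(m+d) * EE p q 1 t m d)" using Suc.IH h1 by simp
    finally show ?thesis using Suc by (simp add: algebra_simps power_add power2_eq_square)
  qed
  have T3: "s^D * (s * qint p q (D+1) * qint p q (D+2) * EE p q s y m (D+1))
      = r^(Suc m + D) * (1 * qint p q (D+1) * qint p q (D+2) * EE p q 1 t m (D+1))"
  proof -
    have "s^D * (s * qint p q (D+1) * qint p q (D+2) * EE p q s y m (D+1))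
       = qint p q (D+1) * qint p q (D+2) * (s^(D+1) * EE p q s y m (D+1))"
      by (simp add: algebra_simps)
    also have "\<dots> = qint p q (D+1) * qint p q (D+2) * (r^(m+(D+1)) * EE p q 1 t m (D+1))"
      by (simp only: Suc.IH)
    finally show ?thesis by (simp add: algebra_simps)
  qed
  show ?case using T1 T2 T3 by (simp only: EE.simps distrib_left)
qed

definition Mat :: "nat set \<Rightarrow> nat set \<Rightarrow> (nat \<Rightarrow> nat) set" where
  "Mat Ob C = {f. (\<forall>j\<in>Ob. j < f j) \<and> bij_betw f Ob C \<and> (\<forall>x. x \<notin> Ob \<longrightarrow> f x = 0)}"

definition nestM :: "nat set \<Rightarrow> (nat \<Rightarrow> nat) \<Rightarrow> nat" where
  "nestM Ob f = card {(i,j). i \<in> Ob \<and> j \<in> Ob \<and> j < i \<and> f i < f j}"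

definition crosM :: "nat set \<Rightarrow> (nat \<Rightarrow> nat) \<Rightarrow> nat" where
  "crosM Ob f = card {(i,j). i \<in> Ob \<and> j \<in> Ob \<and> j < i \<and> i < f j \<and> f j < f i}"

definition hM :: "nat set \<Rightarrow> nat set \<Rightarrow> nat \<Rightarrow> nat" where
  "hM Ob C v = card {j\<in>Ob. j < v} - card {c\<in>C. c < v}"

lemma rank_sum:
  fixes p q :: "'a::comm_ring_1" and J :: "nat set"
  assumes "finite J"
  shows "(\<Sum>j\<in>J. p ^ card {x\<in>J. x < j} * q ^ card {x\<in>J. j < x}) = qint p q (card J)"
  using assms
proof (induction J rule: finite_linorder_max_induct)
  case empty
  then show ?case by (simp add: qint_def)
next
  case (insert b A)
  have bA: "b \<notin> A" using insert by auto
  have e1: "{x \<in> insert b A. x < b} = A" using insert by auto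
  have e2: "{x \<in> insert b A. b < x} = {}" using insert by auto
  have "(\<Sum>j\<in>insert b A. p ^ card {x\<in>insert b A. x < j} * q ^ card {x\<in>insert b A. j < x})
     = p ^ card {x\<in>insert b A. x < b} * q ^ card {x\<in>insert b A. b < x} + (\<Sum>j\<in>A. p ^ card {x\<in>insert b A. x < j} * q ^ card {x\<in>insert b A. j < x})"
    by (rule sum.insert) (use insert bA in auto)
  also have "p ^ card {x\<in>insert b A. x < b} * q ^ card {x\<in>insert b A. b < x} = p ^ card A"
    by (simp only: e1 e2) simp
  also have "(\<Sum>j\<in>A. p ^ card {x\<in>insert b A. x < j} * q ^ card {x\<in>insert b A. j < x})
      = (\<Sum>j\<in>A. q * (p ^ card {x\<in>A. x < j} * q ^ card {x\<in>A. j < x}))"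
  proof (rule sum.cong)
    fix j assume j: "j \<in> A"
    have a1: "{x\<in>insert b A. x < j} = {x\<in>A. x < j}" using j insert by auto
    have a2: "{x\<in>insert b A. j < x} = insert b {x\<in>A. j < x}" using j insert by auto
    have a3: "card (insert b {x\<in>A. j < x}) = Suc (card {x\<in>A. j < x})"
      using bA insert by simp
    show "p ^ card {x\<in>insert b A. x < j} * q ^ card {x\<in>insert b A. j < x}
      = q * (p ^ card {x\<in>A. x < j} * q ^ card {x\<in>A. j < x})"
      using a1 a2 a3 by (simp add: algebra_simps)
  qed simp
  also have "\<dots> = q * qint p q (card A)" using insert(3) by (simp only: sum_distrib_left[symmetric])
  finally have "(\<Sum>j\<in>insert b A. p ^ card {x\<in>insert b A. x < j} * q ^ card {x\<in>insert b A. j < x})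
      = p ^ card A + q * qint p q (card A)" .
  moreover have "qint p q (card (insert b A)) = p ^ card A + q * qint p q (card A)"
  proof -
    have c: "card (insert b A) = Suc (card A)" using insert bA by simp
    have "qint p q (Suc (card A)) = (\<Sum>i<Suc (card A). p ^ i * q ^ (card A - i))"
      by (simp add: qint_def)
    also have "\<dots> = p ^ card A + (\<Sum>i<card A. p ^ i * q ^ (card A - i))"
      by (simp add: add.commute)
    also have "(\<Sum>i<card A. p ^ i * q ^ (card A - i)) = (\<Sum>i<card A. q * (p ^ i * q ^ (card A - 1 - i)))"
    proof (rule sum.cong)
      fix i assume "i \<in> {..<card A}"
      then have "card A - i = Suc (card A - 1 - i)" by auto
      then show "p ^ i * q ^ (card A - i) = q * (p ^ i * q ^ (card A - 1 - i))"
        by (simp add: algebra_simps)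
    qed simp
    finally show ?thesis using c by (simp add: qint_def sum_distrib_left)
  qed
  ultimately show ?case by simp
qed

lemma Mat_finite:
  assumes "finite C"
  shows "finite (Mat Ob C)"
proof -
  have "inj_on (\<lambda>f. restrict f Ob) (Mat Ob C)"
  proof (rule inj_onI)
    fix f g assume f: "f \<in> Mat Ob C" and g: "g \<in> Mat Ob C" and e: "restrict f Ob = restrict g Ob"
    show "f = g"
    proof
      fix x show "f x = g x"
        using f g e unfolding Mat_def by (cases "x \<in> Ob") (auto dest: fun_cong[where x=x])
    qed
  qed
  moreover have "(\<lambda>f. restrict f Ob) ` Mat Ob C \<subseteq> Pi\<^sub>E Ob (\<lambda>_. C)"
    unfolding Mat_def by (auto simp: bij_betw_def)
  moreover have "finite Ob" if ne: "Mat Ob C \<noteq> {}"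
  proof -
    obtain f where "f \<in> Mat Ob C" using ne by auto
    then have "bij_betw f Ob C" unfolding Mat_def by auto
    then show ?thesis using assms bij_betw_finite by blast
  qed
  ultimately show ?thesis
    by (metis finite.emptyI finite_PiE finite_imageD finite_subset assms)
qed


lemma nest_split:
  assumes f: "f \<in> Mat Ob C" and fin: "finite Ob" and low: "\<forall>c\<in>C. v1 \<le> c"
    and j0: "j0 \<in> Ob" and fj0: "f j0 = v1"
  shows "nestM Ob f = nestM (Ob - {j0}) (f(j0:=0)) + card {x\<in>Ob. x < j0}"
proof -
  have inj: "inj_on f Ob" and img: "f ` Ob = C" using f unfolding Mat_def bij_betw_def by auto
  have gt: "v1 < f j" if "j \<in> Ob" "j \<noteq> j0" for j
  proof -
    have "f j \<in> C" using img that by auto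
    moreover have "f j \<noteq> f j0" using inj that j0 by (meson inj_on_contraD)
    ultimately show ?thesis using low fj0 by force
  qed
  have ge: "v1 \<le> f j" if "j \<in> Ob" for j using img that low by auto
  let ?A = "{(i,j). i \<in> Ob \<and> j \<in> Ob \<and> j < i \<and> f i < f j}"
  let ?A' = "{(i,j). i \<in> Ob - {j0} \<and> j \<in> Ob - {j0} \<and> j < i \<and> (f(j0:=0)) i < (f(j0:=0)) j}"
  let ?B = "(\<lambda>j. (j0,j)) ` {x\<in>Ob. x < j0}"
  have eq: "?A = ?A' \<union> ?B"
  proof (rule set_eqI, rule iffI)
    fix z assume z: "z \<in> ?A"
    obtain i j where zij: "z = (i,j)" by fastforce
    show "z \<in> ?A' \<union> ?B"
    proof (cases "i = j0")
      case True then show ?thesis using z zij by auto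
    next
      case False
      have "j \<noteq> j0" using z zij ge fj0 by fastforce
      then show ?thesis using z zij False by auto
    qed
  next
    fix z assume z: "z \<in> ?A' \<union> ?B"
    then show "z \<in> ?A"
    proof
      assume "z \<in> ?A'" then show ?thesis by auto
    next
      assume "z \<in> ?B"
      then obtain j where "z = (j0, j)" "j \<in> Ob" "j < j0" by auto
      then show ?thesis using gt[of j] j0 fj0 by auto
    qed
  qed
  have finA': "finite ?A'"
    by (rule finite_subset[of _ "Ob \<times> Ob"]) (use fin in auto)
  have finB: "finite ?B" using fin by auto
  have disj: "?A' \<inter> ?B = {}" by auto
  have cB: "card ?B = card {x\<in>Ob. x < j0}" by (rule card_image) (auto simp: inj_on_def)
  show ?thesis unfolding nestM_def eq using card_Un_disjoint[OF finA' finB disj] cB by simp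
qed

lemma cros_split:
  assumes f: "f \<in> Mat Ob C" and fin: "finite Ob" and low: "\<forall>c\<in>C. v1 \<le> c"
    and j0: "j0 \<in> Ob" and fj0: "f j0 = v1"
  shows "crosM Ob f = crosM (Ob - {j0}) (f(j0:=0)) + card {x\<in>Ob. j0 < x \<and> x < v1}"
proof -
  have inj: "inj_on f Ob" and img: "f ` Ob = C" using f unfolding Mat_def bij_betw_def by auto
  have gt: "v1 < f j" if "j \<in> Ob" "j \<noteq> j0" for j
  proof -
    have "f j \<in> C" using img that by auto
    moreover have "f j \<noteq> f j0" using inj that j0 by (meson inj_on_contraD)
    ultimately show ?thesis using low fj0 by force
  qed
  have ge: "v1 \<le> f j" if "j \<in> Ob" for j using img that low by auto
  let ?A = "{(i,j). i \<in> Ob \<and> j \<in> Ob \<and> j < i \<and> i < f j \<and> f j < f i}"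
  let ?A' = "{(i,j). i \<in> Ob - {j0} \<and> j \<in> Ob - {j0} \<and> j < i \<and> i < (f(j0:=0)) j \<and> (f(j0:=0)) j < (f(j0:=0)) i}"
  let ?B = "(\<lambda>i. (i,j0)) ` {x\<in>Ob. j0 < x \<and> x < v1}"
  have eq: "?A = ?A' \<union> ?B"
  proof (rule set_eqI, rule iffI)
    fix z assume z: "z \<in> ?A"
    obtain i j where zij: "z = (i,j)" by fastforce
    show "z \<in> ?A' \<union> ?B"
    proof (cases "j = j0")
      case True then show ?thesis using z zij fj0 by auto
    next
      case False
      have "i \<noteq> j0" using z zij ge fj0 by fastforce
      then show ?thesis using z zij False by auto
    qed
  next
    fix z assume z: "z \<in> ?A' \<union> ?B"
    then show "z \<in> ?A"
    proof
      assume "z \<in> ?A'" then show ?thesis by auto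
    next
      assume "z \<in> ?B"
      then obtain i where "z = (i, j0)" "i \<in> Ob" "j0 < i" "i < v1" by auto
      then show ?thesis using gt[of i] j0 fj0 by auto
    qed
  qed
  have finA': "finite ?A'"
    by (rule finite_subset[of _ "Ob \<times> Ob"]) (use fin in auto)
  have finB: "finite ?B" using fin by auto
  have disj: "?A' \<inter> ?B = {}" by auto
  have cB: "card ?B = card {x\<in>Ob. j0 < x \<and> x < v1}" by (rule card_image) (auto simp: inj_on_def)
  show ?thesis unfolding crosM_def eq using card_Un_disjoint[OF finA' finB disj] cB by simp
qed

lemma Mat_remove:
  assumes f: "f \<in> Mat Ob C" and low: "\<forall>c\<in>C. v1 \<le> c" and j0: "j0 \<in> Ob" and fj0: "f j0 = v1"
  shows "f(j0:=0) \<in> Mat (Ob - {j0}) (C - {v1})"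
proof -
  have inj: "inj_on f Ob" and img: "f ` Ob = C" and lt: "\<forall>j\<in>Ob. j < f j"
    and z: "\<forall>x. x \<notin> Ob \<longrightarrow> f x = 0" using f unfolding Mat_def bij_betw_def by auto
  have "bij_betw f (Ob - {j0}) (C - {v1})"
  proof (rule bij_betw_imageI)
    show "inj_on f (Ob - {j0})" using inj by (rule inj_on_subset) auto
    show "f ` (Ob - {j0}) = C - {v1}"
      using inj_on_image_set_diff[OF inj, of Ob "{j0}"] img j0 fj0 by auto
  qed
  then have "bij_betw (f(j0:=0)) (Ob - {j0}) (C - {v1})"
    by (rule iffD1[OF bij_betw_cong, rotated]) auto
  then show ?thesis unfolding Mat_def using lt z by auto
qed

lemma Mat_insert:
  assumes g: "g \<in> Mat (Ob - {j0}) (C - {v1})" and j0: "j0 \<in> Ob" and v1: "v1 \<in> C" and lt0: "j0 < v1"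
  shows "g(j0:=v1) \<in> Mat Ob C"
proof -
  have inj: "inj_on g (Ob - {j0})" and img: "g ` (Ob - {j0}) = C - {v1}"
    and lt: "\<forall>j\<in>Ob - {j0}. j < g j"
    and z: "\<forall>x. x \<notin> Ob - {j0} \<longrightarrow> g x = 0" using g unfolding Mat_def bij_betw_def by auto
  have "inj_on (g(j0:=v1)) Ob"
  proof (rule inj_onI)
    fix a b assume a: "a \<in> Ob" and b: "b \<in> Ob" and e: "(g(j0:=v1)) a = (g(j0:=v1)) b"
    show "a = b"
    proof (cases "a = j0"; cases "b = j0")
      assume "a = j0" "b \<noteq> j0"
      then have "g b \<in> C - {v1}" using img b by auto
      then show ?thesis using e \<open>a = j0\<close> \<open>b \<noteq> j0\<close> by auto
    next
      assume "a \<noteq> j0" "b = j0"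
      then have "g a \<in> C - {v1}" using img a by auto
      then show ?thesis using e \<open>a \<noteq> j0\<close> \<open>b = j0\<close> by auto
    next
      assume "a \<noteq> j0" "b \<noteq> j0"
      then show ?thesis using e inj a b by (auto dest: inj_onD)
    qed simp
  qed
  moreover have "(g(j0:=v1)) ` Ob = C"
  proof -
    have "Ob = insert j0 (Ob - {j0})" using j0 by auto
    then have "(g(j0:=v1)) ` Ob = insert v1 ((g(j0:=v1)) ` (Ob - {j0}))" by (metis image_insert fun_upd_same)
    also have "(g(j0:=v1)) ` (Ob - {j0}) = g ` (Ob - {j0})" by auto
    finally show ?thesis using img v1 by auto
  qed
  ultimately have "bij_betw (g(j0:=v1)) Ob C" by (rule bij_betw_imageI)
  then show ?thesis unfolding Mat_def using lt z lt0 j0 by auto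
qed

lemma Mat_sum:
  fixes p q :: "'a::comm_ring_1"
  assumes "finite Ob" "finite C" "card Ob = card C"
  shows "(\<Sum>f\<in>Mat Ob C. p ^ nestM Ob f * q ^ crosM Ob f) = (\<Prod>v\<in>C. qint p q (hM Ob C v))"
  using assms
proof (induction "card C" arbitrary: Ob C)
  case 0
  then have e: "C = {}" "Ob = {}" by auto
  have "Mat Ob C = {\<lambda>_. 0}" unfolding e Mat_def by (auto simp: bij_betw_def)
  then show ?case unfolding e by (simp add: nestM_def crosM_def)
next
  case (Suc k)
  have Cne: "C \<noteq> {}" using Suc by auto
  define v1 where "v1 = Min C"
  have v1C: "v1 \<in> C" using Cne Suc(4) unfolding v1_def by auto
  have low: "\<forall>c\<in>C. v1 \<le> c" using Suc(4) unfolding v1_def by auto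
  define J where "J = {j\<in>Ob. j < v1}"
  have finJ: "finite J" using Suc(3) unfolding J_def by auto
  define M where "M = (\<lambda>j0. {f\<in>Mat Ob C. f j0 = v1})"
  have cover: "Mat Ob C = (\<Union>j0\<in>J. M j0)"
  proof (rule set_eqI, rule iffI)
    fix f assume f: "f \<in> Mat Ob C"
    then have "v1 \<in> f ` Ob" using v1C unfolding Mat_def bij_betw_def by auto
    then obtain j0 where "j0 \<in> Ob" "f j0 = v1" by auto
    moreover have "j0 < f j0" using f \<open>j0 \<in> Ob\<close> unfolding Mat_def by auto
    ultimately show "f \<in> (\<Union>j0\<in>J. M j0)" using f unfolding J_def M_def by auto
  qed (auto simp: M_def)
  have finM: "\<forall>j0\<in>J. finite (M j0)" using Mat_finite[OF Suc(4)] unfolding M_def by auto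
  have disj: "\<forall>a\<in>J. \<forall>b\<in>J. a \<noteq> b \<longrightarrow> M a \<inter> M b = {}"
  proof (intro ballI impI)
    fix a b assume a: "a \<in> J" and b: "b \<in> J" and ab: "a \<noteq> b"
    show "M a \<inter> M b = {}"
    proof (rule ccontr)
      assume "M a \<inter> M b \<noteq> {}"
      then obtain f where f: "f \<in> Mat Ob C" "f a = v1" "f b = v1" unfolding M_def by auto
      have "inj_on f Ob" using f(1) unfolding Mat_def bij_betw_def by auto
      moreover have "a \<in> Ob" "b \<in> Ob" using a b unfolding J_def by auto
      ultimately have "a = b" using f by (metis inj_onD)
      then show False using ab by simp
    qed
  qed
  define R where "R = (\<Prod>v\<in>C - {v1}. qint p q (hM Ob C v))"
  have piece: "(\<Sum>f\<in>M j0. p ^ nestM Ob f * q ^ crosM Ob f)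
      = p ^ card {x\<in>J. x < j0} * q ^ card {x\<in>J. j0 < x} * R" if j0J: "j0 \<in> J" for j0
  proof -
    have j0: "j0 \<in> Ob" "j0 < v1" using j0J unfolding J_def by auto
    have e1: "{x\<in>Ob. x < j0} = {x\<in>J. x < j0}" using j0 unfolding J_def by auto
    have e2: "{x\<in>Ob. j0 < x \<and> x < v1} = {x\<in>J. j0 < x}" unfolding J_def by auto
    have "(\<Sum>f\<in>M j0. p ^ nestM Ob f * q ^ crosM Ob f)
        = (\<Sum>g\<in>Mat (Ob - {j0}) (C - {v1}).
            p ^ card {x\<in>J. x < j0} * q ^ card {x\<in>J. j0 < x} *
            (p ^ nestM (Ob - {j0}) g * q ^ crosM (Ob - {j0}) g))"
    proof (rule sum.reindex_bij_witness[where i = "\<lambda>g. g(j0:=v1)" and j = "\<lambda>f. f(j0:=0)"])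
      fix f assume f: "f \<in> M j0"
      then show "(f(j0:=0))(j0:=v1) = f" unfolding M_def by auto
      show "f(j0:=0) \<in> Mat (Ob - {j0}) (C - {v1})"
        using f Mat_remove low j0 unfolding M_def by auto
      have fM: "f \<in> Mat Ob C" "f j0 = v1" using f unfolding M_def by auto
      show "p ^ card {x\<in>J. x < j0} * q ^ card {x\<in>J. j0 < x} *
            (p ^ nestM (Ob - {j0}) (f(j0:=0)) * q ^ crosM (Ob - {j0}) (f(j0:=0)))
          = p ^ nestM Ob f * q ^ crosM Ob f"
        using nest_split[OF fM(1) Suc(3) low j0(1) fM(2)] cros_split[OF fM(1) Suc(3) low j0(1) fM(2)] e1 e2
        by (simp add: power_add algebra_simps)
    next
      fix g assume g: "g \<in> Mat (Ob - {j0}) (C - {v1})"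
      have "g j0 = 0" using g unfolding Mat_def by auto
      then show "(g(j0:=v1))(j0:=0) = g" by auto
      show "g(j0:=v1) \<in> M j0" using Mat_insert[OF g j0(1) v1C j0(2)] unfolding M_def by auto
    qed
    also have "\<dots> = p ^ card {x\<in>J. x < j0} * q ^ card {x\<in>J. j0 < x} *
        (\<Sum>g\<in>Mat (Ob - {j0}) (C - {v1}). p ^ nestM (Ob - {j0}) g * q ^ crosM (Ob - {j0}) g)"
      by (simp add: sum_distrib_left)
    also have "(\<Sum>g\<in>Mat (Ob - {j0}) (C - {v1}). p ^ nestM (Ob - {j0}) g * q ^ crosM (Ob - {j0}) g)
        = (\<Prod>v\<in>C - {v1}. qint p q (hM (Ob - {j0}) (C - {v1}) v))"
    proof (rule Suc.hyps)
      show "k = card (C - {v1})" using Suc(2) v1C Suc(4) by simp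
      show "finite (Ob - {j0})" "finite (C - {v1})" using Suc(3,4) by auto
      show "card (Ob - {j0}) = card (C - {v1})" using Suc(3,4,5) v1C j0 by simp
    qed
    also have "\<dots> = R" unfolding R_def
    proof (rule prod.cong)
      fix v assume v: "v \<in> C - {v1}"
      then have vv: "v1 < v" using low by force
      have a1: "card {j\<in>Ob - {j0}. j < v} = card {j\<in>Ob. j < v} - 1"
      proof -
        have "{j\<in>Ob - {j0}. j < v} = {j\<in>Ob. j < v} - {j0}" by auto
        moreover have "j0 \<in> {j\<in>Ob. j < v}" using j0 vv by auto
        ultimately show ?thesis using Suc(3) by simp
      qed
      have a2: "card {c\<in>C - {v1}. c < v} = card {c\<in>C. c < v} - 1"
      proof -
        have "{c\<in>C - {v1}. c < v} = {c\<in>C. c < v} - {v1}" by auto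
        moreover have "v1 \<in> {c\<in>C. c < v}" using v1C vv by auto
        ultimately show ?thesis using Suc(4) by simp
      qed
      have b1: "card {j\<in>Ob. j < v} \<ge> 1"
      proof -
        have "j0 \<in> {j\<in>Ob. j < v}" using j0 vv by auto
        then have "card {j\<in>Ob. j < v} > 0" using Suc(3) by (subst card_gt_0_iff) auto
        then show ?thesis by simp
      qed
      have b2: "card {c\<in>C. c < v} \<ge> 1"
      proof -
        have "v1 \<in> {c\<in>C. c < v}" using v1C vv by auto
        then have "card {c\<in>C. c < v} > 0" using Suc(4) by (subst card_gt_0_iff) auto
        then show ?thesis by simp
      qed
      show "qint p q (hM (Ob - {j0}) (C - {v1}) v) = qint p q (hM Ob C v)"
        unfolding hM_def a1 a2 using b1 b2 by simp
    qed simp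
    finally show ?thesis .
  qed
  have "(\<Sum>f\<in>Mat Ob C. p ^ nestM Ob f * q ^ crosM Ob f)
      = (\<Sum>j0\<in>J. \<Sum>f\<in>M j0. p ^ nestM Ob f * q ^ crosM Ob f)"
    unfolding cover by (rule sum.UNION_disjoint[OF finJ finM disj])
  also have "\<dots> = (\<Sum>j0\<in>J. p ^ card {x\<in>J. x < j0} * q ^ card {x\<in>J. j0 < x} * R)"
    using piece by (rule sum.cong[OF refl])
  also have "\<dots> = qint p q (card J) * R"
    using rank_sum[OF finJ, of p q] by (simp only: sum_distrib_right[symmetric])
  also have "card J = hM Ob C v1"
  proof -
    have "{c\<in>C. c < v1} = {}" using low by force
    then have "card {c\<in>C. c < v1} = 0" by (simp only: card.empty)
    then show ?thesis unfolding hM_def J_def by (simp only: diff_zero)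
  qed
  also have "qint p q (hM Ob C v1) * R = (\<Prod>v\<in>C. qint p q (hM Ob C v))"
    unfolding R_def using Suc(4) v1C by (simp add: prod.remove)
  finally show ?case .
qed

definition ht :: "nat set \<Rightarrow> nat set \<Rightarrow> nat \<Rightarrow> int" where
  "ht Ob C k = int (card {x\<in>Ob. x \<le> k}) - int (card {c\<in>C. c \<le> Suc k})"

definition qi :: "'a::comm_ring_1 \<Rightarrow> 'a \<Rightarrow> int \<Rightarrow> 'a" where
  "qi p q z = qint p q (nat z)"

definition wt :: "'a::comm_ring_1 \<Rightarrow> 'a \<Rightarrow> 'a \<Rightarrow> 'a \<Rightarrow> nat \<Rightarrow> nat set \<Rightarrow> nat set \<Rightarrow> 'a" where
  "wt p q s y m Ob C = s ^ card {k\<in>{1..m}. k \<notin> Ob \<and> Suc k \<in> C} * y ^ card Ob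
     * (\<Prod>k\<in>{k\<in>{1..m}. Suc k \<in> C}. qi p q (ht Ob C k + 1))
     * (\<Prod>k\<in>{k\<in>{1..m}. k \<notin> Ob}. qi p q (ht Ob C (k - 1) + 1))"

definition PP :: "nat \<Rightarrow> (nat set \<times> nat set) set" where
  "PP m = {(Ob, C). Ob \<subseteq> {1..m} \<and> C \<subseteq> {2..Suc m}}"

definition SS :: "'a::comm_ring_1 \<Rightarrow> 'a \<Rightarrow> 'a \<Rightarrow> 'a \<Rightarrow> nat \<Rightarrow> int \<Rightarrow> 'a" where
  "SS p q s y m D = (\<Sum>(Ob, C)\<in>PP m. if ht Ob C m = D then wt p q s y m Ob C else 0)"

definition ext :: "nat \<Rightarrow> (nat set \<times> nat set) \<times> (bool \<times> bool) \<Rightarrow> nat set \<times> nat set" where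
  "ext m x = (case x of ((Ob, C), (a, b)) \<Rightarrow>
     (if a then insert (Suc m) Ob else Ob, if b then insert (Suc (Suc m)) C else C))"

lemma PP_finite: "finite (PP m)"
proof -
  have "PP m \<subseteq> Pow {1..m} \<times> Pow {2..Suc m}" unfolding PP_def by auto
  then show ?thesis by (rule finite_subset) auto
qed

lemma ht_PP: "(Ob, C) \<in> PP m \<Longrightarrow> ht Ob C m = int (card Ob) - int (card C)"
proof -
  assume "(Ob, C) \<in> PP m"
  then have "{x\<in>Ob. x \<le> m} = Ob" "{c\<in>C. c \<le> Suc m} = C" unfolding PP_def by auto
  then show ?thesis unfolding ht_def by simp
qed

lemma ht_ext_low:
  assumes "k \<le> m"
  shows "ht (if a then insert (Suc m) Ob else Ob) (if b then insert (Suc (Suc m)) C else C) k = ht Ob C k"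
proof -
  have "{x\<in>(if a then insert (Suc m) Ob else Ob). x \<le> k} = {x\<in>Ob. x \<le> k}" using assms by auto
  moreover have "{c\<in>(if b then insert (Suc (Suc m)) C else C). c \<le> Suc k} = {c\<in>C. c \<le> Suc k}"
    using assms by auto
  ultimately show ?thesis unfolding ht_def by simp
qed

lemma wt_ext:
  fixes a b :: bool and p q s y :: "'a::comm_ring_1"
  assumes P: "(Ob, C) \<in> PP m"
  defines "Ob' \<equiv> (if a then insert (Suc m) Ob else Ob)"
    and "C' \<equiv> (if b then insert (Suc (Suc m)) C else C)"
  shows "wt p q s y (Suc m) Ob' C' = wt p q s y m Ob C
     * ((if \<not> a \<and> b then s else 1) * (if a then y else 1)
        * (if b then qi p q (ht Ob' C' (Suc m) + 1) else 1)
        * (if \<not> a then qi p q (ht Ob C m + 1) else 1))"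
proof -
  have ObS: "Ob \<subseteq> {1..m}" and CS: "C \<subseteq> {2..Suc m}" using P unfolding PP_def by auto
  have finO: "finite Ob" using ObS finite_subset by blast
  have m1: "Suc m \<notin> Ob" using ObS by auto
  have m2: "Suc (Suc m) \<notin> C" using CS by auto
  have memO: "k \<in> Ob' \<longleftrightarrow> k \<in> Ob" if "k \<le> m" for k using that unfolding Ob'_def by auto
  have memC: "Suc k \<in> C' \<longleftrightarrow> Suc k \<in> C" if "k \<le> m" for k using that unfolding C'_def by auto
  have sm1: "Suc m \<in> Ob' \<longleftrightarrow> a" unfolding Ob'_def using m1 by auto
  have sm2: "Suc (Suc m) \<in> C' \<longleftrightarrow> b" unfolding C'_def using m2 by auto
  have htl: "ht Ob' C' k = ht Ob C k" if "k \<le> m" for k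
    unfolding Ob'_def C'_def using ht_ext_low[OF that] .
  have e1: "{k\<in>{1..Suc m}. k \<notin> Ob' \<and> Suc k \<in> C'}
      = (if \<not> a \<and> b then insert (Suc m) else id) {k\<in>{1..m}. k \<notin> Ob \<and> Suc k \<in> C}"
    using sm1 sm2 by (auto simp: le_Suc_eq memO memC)
  have c1: "card {k\<in>{1..Suc m}. k \<notin> Ob' \<and> Suc k \<in> C'}
      = card {k\<in>{1..m}. k \<notin> Ob \<and> Suc k \<in> C} + (if \<not> a \<and> b then 1 else 0)"
    unfolding e1 by auto
  have c2: "card Ob' = card Ob + (if a then 1 else 0)"
    unfolding Ob'_def using m1 finO by auto
  have e3: "{k\<in>{1..Suc m}. Suc k \<in> C'} = (if b then insert (Suc m) else id) {k\<in>{1..m}. Suc k \<in> C}"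
    using sm2 by (auto simp: le_Suc_eq memC)
  have p3: "(\<Prod>k\<in>{k\<in>{1..Suc m}. Suc k \<in> C'}. qi p q (ht Ob' C' k + 1))
     = (if b then qi p q (ht Ob' C' (Suc m) + 1) else 1) * (\<Prod>k\<in>{k\<in>{1..m}. Suc k \<in> C}. qi p q (ht Ob C k + 1))"
  proof -
    have "(\<Prod>k\<in>{k\<in>{1..m}. Suc k \<in> C}. qi p q (ht Ob' C' k + 1)) = (\<Prod>k\<in>{k\<in>{1..m}. Suc k \<in> C}. qi p q (ht Ob C k + 1))"
      by (rule prod.cong) (auto simp: htl)
    then show ?thesis unfolding e3 by auto
  qed
  have e4: "{k\<in>{1..Suc m}. k \<notin> Ob'} = (if \<not> a then insert (Suc m) else id) {k\<in>{1..m}. k \<notin> Ob}"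
    using sm1 by (auto simp: le_Suc_eq memO)
  have p4: "(\<Prod>k\<in>{k\<in>{1..Suc m}. k \<notin> Ob'}. qi p q (ht Ob' C' (k - 1) + 1))
     = (if \<not> a then qi p q (ht Ob C m + 1) else 1) * (\<Prod>k\<in>{k\<in>{1..m}. k \<notin> Ob}. qi p q (ht Ob C (k - 1) + 1))"
  proof -
    have "(\<Prod>k\<in>{k\<in>{1..m}. k \<notin> Ob}. qi p q (ht Ob' C' (k - 1) + 1)) = (\<Prod>k\<in>{k\<in>{1..m}. k \<notin> Ob}. qi p q (ht Ob C (k - 1) + 1))"
      by (rule prod.cong) (auto simp: htl)
    moreover have "ht Ob' C' (Suc m - 1) = ht Ob C m" using htl by simp
    ultimately show ?thesis unfolding e4 by auto
  qed
  show ?thesis unfolding wt_def c1 c2 p3 p4 by (simp add: power_add algebra_simps)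
qed

lemma ext_PP: "x \<in> PP m \<Longrightarrow> ext m (x, ab) \<in> PP (Suc m)"
  unfolding PP_def ext_def by (cases x; cases ab) auto

lemma ht_ext_top:
  fixes a b :: bool
  assumes P: "(Ob, C) \<in> PP m"
  shows "ht (if a then insert (Suc m) Ob else Ob) (if b then insert (Suc (Suc m)) C else C) (Suc m)
       = ht Ob C m + (if a then 1 else 0) - (if b then 1 else 0)"
proof -
  have "ext m ((Ob, C), (a, b)) \<in> PP (Suc m)" using ext_PP[OF P] .
  then have h: "ht (if a then insert (Suc m) Ob else Ob) (if b then insert (Suc (Suc m)) C else C) (Suc m)
     = int (card (if a then insert (Suc m) Ob else Ob)) - int (card (if b then insert (Suc (Suc m)) C else C))"
    unfolding ext_def by (auto intro: ht_PP)
  have ObS: "Ob \<subseteq> {1..m}" and CS: "C \<subseteq> {2..Suc m}" using P unfolding PP_def by auto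
  have fO: "finite Ob" "finite C" using ObS CS finite_subset by auto
  have "Suc m \<notin> Ob" "Suc (Suc m) \<notin> C" using ObS CS by auto
  then show ?thesis unfolding h ht_PP[OF P] using fO by auto
qed

lemma SS_Suc:
  fixes p q s y :: "'a::comm_ring_1"
  shows "SS p q s y (Suc m) D = qi p q (D+1) * SS p q s y m D + y * qi p q (D+1) * SS p q s y m D
     + y * SS p q s y m (D - 1) + s * qi p q (D+1) * qi p q (D+2) * SS p q s y m (D+1)"
proof -
  define F where "F = (\<lambda>(Ob, C). if ht Ob C (Suc m) = D then wt p q s y (Suc m) Ob C else 0)"
  define inv where "inv = (\<lambda>(Ob, C). ((Ob - {Suc m}, C - {Suc (Suc m)}), (Suc m \<in> Ob, Suc (Suc m) \<in> C)))"
  have "SS p q s y (Suc m) D = (\<Sum>z\<in>PP (Suc m). F z)" unfolding SS_def F_def by simp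
  also have "\<dots> = (\<Sum>x\<in>PP m \<times> (UNIV :: (bool \<times> bool) set). F (ext m x))"
  proof (rule sym, rule sum.reindex_bij_witness[where i = inv and j = "ext m"])
    fix x assume x: "x \<in> PP m \<times> (UNIV :: (bool \<times> bool) set)"
    obtain Ob C a b where xe: "x = ((Ob, C), (a, b))" by (metis prod.collapse)
    have "Suc m \<notin> Ob" "Suc (Suc m) \<notin> C" using x xe unfolding PP_def by auto
    then show "inv (ext m x) = x" unfolding xe inv_def ext_def by auto
    show "ext m x \<in> PP (Suc m)" using x xe ext_PP by auto
  next
    fix z assume z: "z \<in> PP (Suc m)"
    obtain Ob C where ze: "z = (Ob, C)" by fastforce
    show "ext m (inv z) = z" unfolding ze inv_def ext_def by auto
    show "inv z \<in> PP m \<times> (UNIV :: (bool \<times> bool) set)" using z unfolding ze inv_def PP_def by (auto simp: le_Suc_eq)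
  qed simp
  also have "\<dots> = (\<Sum>x\<in>PP m. \<Sum>ab\<in>UNIV. F (ext m (x, ab)))"
    by (subst sum.cartesian_product) (simp add: case_prod_unfold)
  also have "\<dots> = (\<Sum>x\<in>PP m.
        (if ht (fst x) (snd x) m = D then qi p q (D+1) * wt p q s y m (fst x) (snd x) else 0)
      + (if ht (fst x) (snd x) m = D then y * qi p q (D+1) * wt p q s y m (fst x) (snd x) else 0)
      + (if ht (fst x) (snd x) m = D - 1 then y * wt p q s y m (fst x) (snd x) else 0)
      + (if ht (fst x) (snd x) m = D + 1 then s * qi p q (D+1) * qi p q (D+2) * wt p q s y m (fst x) (snd x) else 0))"
  proof (rule sum.cong[OF refl])
    fix x assume x: "x \<in> PP m"
    obtain Ob C where xe: "x = (Ob, C)" by fastforce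
    have P: "(Ob, C) \<in> PP m" using x xe by simp
    have U: "(UNIV :: (bool \<times> bool) set) = {(True,True),(True,False),(False,True),(False,False)}" by auto
    have FF: "F (ext m ((Ob, C), (a, b))) =
      (if ht Ob C m + (if a then 1 else 0) - (if b then 1 else 0) = D then
        wt p q s y m Ob C * ((if \<not> a \<and> b then s else 1) * (if a then y else 1)
        * (if b then qi p q (ht Ob C m + (if a then 1 else 0) - (if b then 1 else 0) + 1) else 1)
        * (if \<not> a then qi p q (ht Ob C m + 1) else 1)) else 0)" for a b
      unfolding F_def ext_def prod.case wt_ext[OF P, where a=a and b=b and p=p and q=q and s=s and y=y] ht_ext_top[OF P, where a=a and b=b] by (rule refl)
    show "(\<Sum>ab\<in>UNIV. F (ext m (x, ab))) = 
        (if ht (fst x) (snd x) m = D then qi p q (D+1) * wt p q s y m (fst x) (snd x) else 0)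
      + (if ht (fst x) (snd x) m = D then y * qi p q (D+1) * wt p q s y m (fst x) (snd x) else 0)
      + (if ht (fst x) (snd x) m = D - 1 then y * wt p q s y m (fst x) (snd x) else 0)
      + (if ht (fst x) (snd x) m = D + 1 then s * qi p q (D+1) * qi p q (D+2) * wt p q s y m (fst x) (snd x) else 0)"
      unfolding xe U using FF by (simp add: algebra_simps)
  qed
  also have "\<dots> = qi p q (D+1) * SS p q s y m D + y * qi p q (D+1) * SS p q s y m D
     + y * SS p q s y m (D - 1) + s * qi p q (D+1) * qi p q (D+2) * SS p q s y m (D+1)"
    unfolding SS_def sum.distrib sum_distrib_left
    by (intro arg_cong2[where f="(+)"] sum.cong) (auto split: prod.splits)
  finally show ?thesis .
qed

lemma SS_EE:
  fixes p q s y :: "'a::comm_ring_1"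
  shows "SS p q s y m D = (if D < 0 then 0 else EE p q s y m (nat D))"
proof (induction m arbitrary: D)
  case 0
  have "PP 0 = {({}, {})}" unfolding PP_def by auto
  then show ?case unfolding SS_def by (auto simp: ht_def wt_def)
next
  case (Suc m)
  have q0: "qi p q z = 0" if "z \<le> 0" for z using that unfolding qi_def qint_def by simp
  show ?case
  proof (cases "D < 0")
    case True
    then show ?thesis unfolding SS_Suc Suc.IH using q0[of "D+1"] by simp
  next
    case False
    then obtain d where d: "D = int d" by (metis nonneg_int_cases not_less)
    have a1: "qi p q (D+1) = qint p q (d+1)" unfolding qi_def d by (simp add: nat_add_distrib)
    have a2: "qi p q (D+2) = qint p q (d+2)" unfolding qi_def d by (simp add: nat_add_distrib)
    have a3: "nat (D+1) = d + 1" unfolding d by simp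
    have a4: "(if D - 1 < 0 then 0 else EE p q s y m (nat (D - 1))) = (if d > 0 then EE p q s y m (d - 1) else 0)"
      unfolding d by (cases d) auto
    show ?thesis unfolding SS_Suc Suc.IH a1 a2 a3 a4 using False d
      by (simp add: algebra_simps)
  qed
qed

definition ExS :: "nat \<Rightarrow> (nat \<Rightarrow> nat) \<Rightarrow> nat set" where
  "ExS n \<sigma> = {i\<in>{1..n}. i < \<sigma> i}"
definition ExV :: "nat \<Rightarrow> (nat \<Rightarrow> nat) \<Rightarrow> nat set" where
  "ExV n \<sigma> = \<sigma> ` ExS n \<sigma>"
definition NV :: "nat \<Rightarrow> (nat \<Rightarrow> nat) \<Rightarrow> nat set" where
  "NV n \<sigma> = {1..n} - ExV n \<sigma>"
definition fM :: "nat \<Rightarrow> (nat \<Rightarrow> nat) \<Rightarrow> nat \<Rightarrow> nat" where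
  "fM n \<sigma> = (\<lambda>i. if i \<in> ExS n \<sigma> then \<sigma> i else 0)"
definition gM :: "nat \<Rightarrow> (nat \<Rightarrow> nat) \<Rightarrow> nat \<Rightarrow> nat" where
  "gM n \<sigma> = (\<lambda>t. if t \<in> NV n \<sigma> then Suc (inv \<sigma> t) else 0)"

lemma perm_facts:
  assumes "\<sigma> permutes {1..n}"
  shows "\<And>i. i \<in> {1..n} \<Longrightarrow> \<sigma> i \<in> {1..n}"
    and "\<And>i. i \<in> {1..n} \<Longrightarrow> inv \<sigma> i \<in> {1..n}"
    and "\<And>x. \<sigma> (inv \<sigma> x) = x" and "\<And>x. inv \<sigma> (\<sigma> x) = x"
    and "\<And>x y. \<sigma> x = \<sigma> y \<longleftrightarrow> x = y"
proof -
  show "\<And>i. i \<in> {1..n} \<Longrightarrow> \<sigma> i \<in> {1..n}" using permutes_in_image[OF assms] by blast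
  show "\<And>i. i \<in> {1..n} \<Longrightarrow> inv \<sigma> i \<in> {1..n}"
    using permutes_in_image[OF permutes_inv[OF assms]] by blast
  show "\<And>x. \<sigma> (inv \<sigma> x) = x" "\<And>x. inv \<sigma> (\<sigma> x) = x" using permutes_inverses[OF assms] by auto
  show "\<And>x y. \<sigma> x = \<sigma> y \<longleftrightarrow> x = y" using permutes_inj[OF assms] by (auto dest: injD)
qed

lemma ExV_iff:
  assumes "\<sigma> permutes {1..n}"
  shows "t \<in> ExV n \<sigma> \<longleftrightarrow> t \<in> {1..n} \<and> inv \<sigma> t < t"
proof
  assume "t \<in> ExV n \<sigma>"
  then obtain i where "i \<in> ExS n \<sigma>" "t = \<sigma> i" unfolding ExV_def by auto
  then show "t \<in> {1..n} \<and> inv \<sigma> t < t" using perm_facts[OF assms] unfolding ExS_def by auto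
next
  assume a: "t \<in> {1..n} \<and> inv \<sigma> t < t"
  then have "inv \<sigma> t \<in> ExS n \<sigma>" using perm_facts[OF assms] unfolding ExS_def by auto
  then have "\<sigma> (inv \<sigma> t) \<in> ExV n \<sigma>" unfolding ExV_def by auto
  then show "t \<in> ExV n \<sigma>" using perm_facts[OF assms] by simp
qed

lemma NV_iff:
  assumes "\<sigma> permutes {1..n}"
  shows "t \<in> NV n \<sigma> \<longleftrightarrow> t \<in> {1..n} \<and> t \<le> inv \<sigma> t"
  unfolding NV_def using ExV_iff[OF assms, of t] by (auto simp: not_less)

lemma ExS_iff: "i \<in> ExS n \<sigma> \<longleftrightarrow> i \<in> {1..n} \<and> i < \<sigma> i"
  unfolding ExS_def by auto

lemma nest_eq:
  assumes sp: "\<sigma> permutes {1..n}"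
  shows "nest n \<sigma> = nestM (ExS n \<sigma>) (fM n \<sigma>) + nestM (NV n \<sigma>) (gM n \<sigma>)"
proof -
  note pf = perm_facts[OF sp]
  let ?S = "SIGMA i:{1..n}. {j \<in> {1..n}.
      (j < i \<and> i < \<sigma> i \<and> \<sigma> i < \<sigma> j) \<or> (\<sigma> j < \<sigma> i \<and> \<sigma> i \<le> i \<and> i < j)}"
  let ?U = "{(i,j). i \<in> {1..n} \<and> j \<in> {1..n} \<and> j < i \<and> i < \<sigma> i \<and> \<sigma> i < \<sigma> j}"
  let ?L = "{(i,j). i \<in> {1..n} \<and> j \<in> {1..n} \<and> \<sigma> j < \<sigma> i \<and> \<sigma> i \<le> i \<and> i < j}"
  have "nest n \<sigma> = card ?S" unfolding nest_def nest_i_def by (subst card_SigmaI) auto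
  also have "?S = ?U \<union> ?L" by auto
  also have "card (?U \<union> ?L) = card ?U + card ?L"
    by (rule card_Un_disjoint) (auto intro: finite_subset[of _ "{1..n} \<times> {1..n}"])
  also have "?U = {(i,j). i \<in> ExS n \<sigma> \<and> j \<in> ExS n \<sigma> \<and> j < i \<and> fM n \<sigma> i < fM n \<sigma> j}"
    unfolding fM_def ExS_iff by auto
  also have "card ?L = nestM (NV n \<sigma>) (gM n \<sigma>)"
  proof -
    have "{(i,j). i \<in> NV n \<sigma> \<and> j \<in> NV n \<sigma> \<and> j < i \<and> gM n \<sigma> i < gM n \<sigma> j}
        = (\<lambda>(i,j). (\<sigma> i, \<sigma> j)) ` ?L"
    proof (rule set_eqI, rule iffI)
      fix z assume z: "z \<in> {(i,j). i \<in> NV n \<sigma> \<and> j \<in> NV n \<sigma> \<and> j < i \<and> gM n \<sigma> i < gM n \<sigma> j}"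
      obtain a b where zab: "z = (a, b)" by fastforce
      have "(inv \<sigma> a, inv \<sigma> b) \<in> ?L" using z pf unfolding zab gM_def NV_iff[OF sp] by auto
      moreover have "z = (\<lambda>(i,j). (\<sigma> i, \<sigma> j)) (inv \<sigma> a, inv \<sigma> b)" using pf zab by simp
      ultimately show "z \<in> (\<lambda>(i,j). (\<sigma> i, \<sigma> j)) ` ?L" by blast
    next
      fix z assume "z \<in> (\<lambda>(i,j). (\<sigma> i, \<sigma> j)) ` ?L"
      then obtain i j where ij: "(i,j) \<in> ?L" "z = (\<sigma> i, \<sigma> j)" by auto
      then show "z \<in> {(i,j). i \<in> NV n \<sigma> \<and> j \<in> NV n \<sigma> \<and> j < i \<and> gM n \<sigma> i < gM n \<sigma> j}"
        using pf unfolding gM_def NV_iff[OF sp] by auto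
    qed
    moreover have "inj_on (\<lambda>(i,j). (\<sigma> i, \<sigma> j)) ?L" using pf by (auto simp: inj_on_def)
    ultimately show ?thesis unfolding nestM_def by (simp add: card_image)
  qed
  finally show ?thesis unfolding nestM_def by simp
qed

lemma cros_eq:
  assumes sp: "\<sigma> permutes {1..n}"
  shows "cros n \<sigma> = crosM (ExS n \<sigma>) (fM n \<sigma>) + crosM (NV n \<sigma>) (gM n \<sigma>)"
proof -
  note pf = perm_facts[OF sp]
  let ?S = "SIGMA i:{1..n}. {j \<in> {1..n}.
      (j < i \<and> i < \<sigma> j \<and> \<sigma> j < \<sigma> i) \<or> (\<sigma> i < \<sigma> j \<and> \<sigma> j \<le> i \<and> i < j)}"
  let ?U = "{(i,j). i \<in> {1..n} \<and> j \<in> {1..n} \<and> j < i \<and> i < \<sigma> j \<and> \<sigma> j < \<sigma> i}"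
  let ?L = "{(i,j). i \<in> {1..n} \<and> j \<in> {1..n} \<and> \<sigma> i < \<sigma> j \<and> \<sigma> j \<le> i \<and> i < j}"
  have "cros n \<sigma> = card ?S" unfolding cros_def cros_i_def by (subst card_SigmaI) auto
  also have "?S = ?U \<union> ?L" by auto
  also have "card (?U \<union> ?L) = card ?U + card ?L"
    by (rule card_Un_disjoint) (auto intro: finite_subset[of _ "{1..n} \<times> {1..n}"])
  also have "?U = {(i,j). i \<in> ExS n \<sigma> \<and> j \<in> ExS n \<sigma> \<and> j < i \<and> i < fM n \<sigma> j \<and> fM n \<sigma> j < fM n \<sigma> i}"
    unfolding fM_def ExS_iff by auto
  also have "card ?L = crosM (NV n \<sigma>) (gM n \<sigma>)"
  proof -
    have "{(i,j). i \<in> NV n \<sigma> \<and> j \<in> NV n \<sigma> \<and> j < i \<and> i < gM n \<sigma> j \<and> gM n \<sigma> j < gM n \<sigma> i}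
        = (\<lambda>(i,j). (\<sigma> j, \<sigma> i)) ` ?L"
    proof (rule set_eqI, rule iffI)
      fix z assume z: "z \<in> {(i,j). i \<in> NV n \<sigma> \<and> j \<in> NV n \<sigma> \<and> j < i \<and> i < gM n \<sigma> j \<and> gM n \<sigma> j < gM n \<sigma> i}"
      obtain a b where zab: "z = (a, b)" by fastforce
      have "(inv \<sigma> b, inv \<sigma> a) \<in> ?L" using z pf unfolding zab gM_def NV_iff[OF sp] by auto
      moreover have "z = (\<lambda>(i,j). (\<sigma> j, \<sigma> i)) (inv \<sigma> b, inv \<sigma> a)" using pf zab by simp
      ultimately show "z \<in> (\<lambda>(i,j). (\<sigma> j, \<sigma> i)) ` ?L" by blast
    next
      fix z assume "z \<in> (\<lambda>(i,j). (\<sigma> j, \<sigma> i)) ` ?L"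
      then obtain i j where ij: "(i,j) \<in> ?L" "z = (\<sigma> j, \<sigma> i)" by auto
      then show "z \<in> {(i,j). i \<in> NV n \<sigma> \<and> j \<in> NV n \<sigma> \<and> j < i \<and> i < gM n \<sigma> j \<and> gM n \<sigma> j < gM n \<sigma> i}"
        using pf unfolding gM_def NV_iff[OF sp] by auto
    qed
    moreover have "inj_on (\<lambda>(i,j). (\<sigma> j, \<sigma> i)) ?L" using pf by (auto simp: inj_on_def)
    ultimately show ?thesis unfolding crosM_def by (simp add: card_image)
  qed
  finally show ?thesis unfolding crosM_def by simp
qed

lemma exc_eq: "exc n \<sigma> = card (ExS n \<sigma>)"
  unfolding exc_def ExS_def by simp

lemma star_inj:
  assumes sp: "\<sigma> permutes {1..n}"
  shows "inj_on (star_comp n \<sigma>) {0..n}"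
proof (rule inj_onI)
  note pf = perm_facts[OF sp]
  fix a b assume a: "a \<in> {0..n}" and b: "b \<in> {0..n}" and e: "star_comp n \<sigma> a = star_comp n \<sigma> b"
  show "a = b"
  proof (cases "a = 0"; cases "b = 0")
    assume "a = 0" "b \<noteq> 0"
    then have "\<sigma> b \<in> {1..n}" using pf b by auto
    then show ?thesis using e \<open>a = 0\<close> \<open>b \<noteq> 0\<close> unfolding star_comp_def by auto
  next
    assume "a \<noteq> 0" "b = 0"
    then have "\<sigma> a \<in> {1..n}" using pf a by auto
    then show ?thesis using e \<open>a \<noteq> 0\<close> \<open>b = 0\<close> unfolding star_comp_def by auto
  next
    assume "a \<noteq> 0" "b \<noteq> 0"
    then have "\<sigma> a \<in> {1..n}" "\<sigma> b \<in> {1..n}" using pf a b by auto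
    then have "\<sigma> a = \<sigma> b" using e \<open>a \<noteq> 0\<close> \<open>b \<noteq> 0\<close> unfolding star_comp_def by auto
    then show ?thesis using pf by simp
  qed simp
qed

lemma cpk_eq:
  assumes sp: "\<sigma> permutes {1..n}"
  shows "cpk_star n \<sigma> = card {k\<in>{1..n-1}. k \<notin> ExS n \<sigma> \<and> Suc k \<in> ExV n \<sigma>}"
proof -
  note pf = perm_facts[OF sp]
  have "{i \<in> {1..n-1}. inv_into {0..n} (star_comp n \<sigma>) i < i \<and> star_comp n \<sigma> i < i}
      = {k\<in>{1..n-1}. k \<notin> ExS n \<sigma> \<and> Suc k \<in> ExV n \<sigma>}"
  proof (rule set_eqI)
    fix i
    show "i \<in> {i \<in> {1..n-1}. inv_into {0..n} (star_comp n \<sigma>) i < i \<and> star_comp n \<sigma> i < i}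
      \<longleftrightarrow> i \<in> {k\<in>{1..n-1}. k \<notin> ExS n \<sigma> \<and> Suc k \<in> ExV n \<sigma>}"
    proof (cases "i \<in> {1..n-1}")
      case False then show ?thesis by auto
    next
      case True
      define x where "x = inv \<sigma> (Suc i)"
      have si: "Suc i \<in> {1..n}" using True by auto
      have x1: "x \<in> {1..n}" using pf si unfolding x_def by auto
      have x2: "\<sigma> x = Suc i" using pf unfolding x_def by simp
      have ii: "inv_into {0..n} (star_comp n \<sigma>) i = x"
        by (rule inv_into_f_eq[OF star_inj[OF sp]]) (use x1 x2 in \<open>auto simp: star_comp_def\<close>)
      have sci: "star_comp n \<sigma> i = \<sigma> i - 1" using True unfolding star_comp_def by auto
      have s1: "\<sigma> i \<ge> 1" using pf True by force
      have eqv1: "\<sigma> i - 1 < i \<longleftrightarrow> i \<notin> ExS n \<sigma>" using s1 True unfolding ExS_iff by auto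
      have eqv2: "Suc i \<in> ExV n \<sigma> \<longleftrightarrow> x < Suc i" using ExV_iff[OF sp, of "Suc i"] si unfolding x_def by auto
      have xi: "x \<noteq> i" if "i \<notin> ExS n \<sigma>" using that x2 True unfolding ExS_iff by auto
      show ?thesis using True ii sci eqv1 eqv2 xi by auto
    qed
  qed
  then show ?thesis unfolding cpk_star_def by simp
qed

definition Psi :: "nat \<Rightarrow> nat set \<Rightarrow> nat set \<Rightarrow> (nat \<Rightarrow> nat) \<times> (nat \<Rightarrow> nat) \<Rightarrow> nat \<Rightarrow> nat" where
  "Psi n Ob C fg = (\<lambda>i. if i \<in> Ob then fst fg i
      else if i \<in> {1..n} then inv_into ({1..n} - C) (snd fg) (Suc i) else i)"

lemma Psi_props:
  assumes ObS: "Ob \<subseteq> {1..n}" and CS: "C \<subseteq> {1..n}"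
    and f: "f \<in> Mat Ob C" and g: "g \<in> Mat ({1..n} - C) (Suc ` ({1..n} - Ob))"
  defines "\<tau> \<equiv> Psi n Ob C (f, g)"
  shows "\<tau> permutes {1..n}" and "ExS n \<tau> = Ob" and "ExV n \<tau> = C"
    and "fM n \<tau> = f" and "gM n \<tau> = g"
proof -
  let ?T = "{1..n} - C" and ?S = "Suc ` ({1..n} - Ob)"
  have fl: "\<forall>j\<in>Ob. j < f j" and fb: "bij_betw f Ob C" and fz: "\<forall>x. x \<notin> Ob \<longrightarrow> f x = 0"
    using f unfolding Mat_def by auto
  have gl: "\<forall>j\<in>?T. j < g j" and gb: "bij_betw g ?T ?S" and gz: "\<forall>x. x \<notin> ?T \<longrightarrow> g x = 0"
    using g unfolding Mat_def by auto
  have gi: "bij_betw (inv_into ?T g) ?S ?T" using bij_betw_inv_into[OF gb] .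
  have tO: "\<tau> i = f i" if "i \<in> Ob" for i using that unfolding \<tau>_def Psi_def by simp
  have tN: "\<tau> i = inv_into ?T g (Suc i)" if "i \<in> {1..n} - Ob" for i using that unfolding \<tau>_def Psi_def by simp
  have tX: "\<tau> i = i" if "i \<notin> {1..n}" for i using that ObS unfolding \<tau>_def Psi_def by auto
  have tNT: "\<tau> i \<in> ?T" if "i \<in> {1..n} - Ob" for i
    using tN[OF that] bij_betwE[OF gi] that by auto
  have tNg: "g (\<tau> i) = Suc i" if "i \<in> {1..n} - Ob" for i
    using tN[OF that] f_inv_into_f[of "Suc i" g ?T] bij_betw_imp_surj_on[OF gb] that by auto
  have tOC: "\<tau> i \<in> C" if "i \<in> Ob" for i using tO[OF that] bij_betwE[OF fb] that by auto
  have into: "\<tau> ` {1..n} \<subseteq> {1..n}"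
  proof
    fix z assume "z \<in> \<tau> ` {1..n}"
    then obtain i where i: "i \<in> {1..n}" "z = \<tau> i" by auto
    show "z \<in> {1..n}"
      using tOC[of i] tNT[of i] CS i by (cases "i \<in> Ob") auto
  qed
  have inj: "inj_on \<tau> {1..n}"
  proof (rule inj_onI)
    fix a b assume a: "a \<in> {1..n}" and b: "b \<in> {1..n}" and e: "\<tau> a = \<tau> b"
    show "a = b"
    proof (cases "a \<in> Ob"; cases "b \<in> Ob")
      assume "a \<in> Ob" "b \<in> Ob"
      then have "f a = f b" using e tO by simp
      then show ?thesis using bij_betw_imp_inj_on[OF fb] \<open>a \<in> Ob\<close> \<open>b \<in> Ob\<close> by (simp add: inj_on_eq_iff)
    next
      assume "a \<in> Ob" "b \<notin> Ob"
      have "\<tau> a \<in> C" using tOC \<open>a \<in> Ob\<close> by blast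
      moreover have "\<tau> b \<notin> C" using tNT[of b] b \<open>b \<notin> Ob\<close> by blast
      ultimately show ?thesis using e by simp
    next
      assume "a \<notin> Ob" "b \<in> Ob"
      have "\<tau> b \<in> C" using tOC \<open>b \<in> Ob\<close> by blast
      moreover have "\<tau> a \<notin> C" using tNT[of a] a \<open>a \<notin> Ob\<close> by blast
      ultimately show ?thesis using e by simp
    next
      assume "a \<notin> Ob" "b \<notin> Ob"
      have "g (\<tau> a) = Suc a" by (rule tNg) (use a \<open>a \<notin> Ob\<close> in simp)
      moreover have "g (\<tau> b) = Suc b" by (rule tNg) (use b \<open>b \<notin> Ob\<close> in simp)
      ultimately have "Suc a = Suc b" using e by (metis)
      then show ?thesis by (rule Suc_inject)
    qed
  qed
  have img: "\<tau> ` {1..n} = {1..n}" by (rule endo_inj_surj[OF _ into inj]) simp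
  show tp: "\<tau> permutes {1..n}"
    by (rule bij_imp_permutes) (use inj img tX in \<open>auto simp: bij_betw_def\<close>)
  show eO: "ExS n \<tau> = Ob"
  proof (rule set_eqI)
    fix i show "i \<in> ExS n \<tau> \<longleftrightarrow> i \<in> Ob"
    proof (cases "i \<in> Ob")
      case True then show ?thesis using ObS tO fl unfolding ExS_iff by auto
    next
      case False
      show ?thesis
      proof (cases "i \<in> {1..n}")
        case True
        then have i1: "i \<in> {1..n} - Ob" using False by simp
        have "\<tau> i < g (\<tau> i)" using gl tNT[OF i1] by blast
        then have "\<tau> i < Suc i" using tNg[OF i1] by simp
        then show ?thesis using False unfolding ExS_iff by auto
      qed (use False in \<open>auto simp: ExS_iff\<close>)
    qed
  qed
  show "ExV n \<tau> = C" unfolding ExV_def eO using tO bij_betw_imp_surj_on[OF fb] by auto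
  show "fM n \<tau> = f"
  proof
    fix i show "fM n \<tau> i = f i" unfolding fM_def eO using tO fz by auto
  qed
  show "gM n \<tau> = g"
  proof
    fix t
    have NVe: "NV n \<tau> = ?T" unfolding NV_def ExV_def eO using tO bij_betw_imp_surj_on[OF fb] by auto
    show "gM n \<tau> t = g t"
    proof (cases "t \<in> ?T")
      case True
      have "g t \<in> ?S" using bij_betwE[OF gb] True by auto
      then obtain j where j: "j \<in> {1..n} - Ob" "g t = Suc j" by auto
      have "\<tau> j = inv_into ?T g (g t)" using tN[OF j(1)] j(2) by simp
      also have "\<dots> = t" using bij_betw_imp_inj_on[OF gb] True by (simp add: inv_into_f_f)
      finally have "inv \<tau> t = j" using permutes_inv_eq[OF tp, of t j] by simp
      then show ?thesis unfolding gM_def NVe using True j by simp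
    next
      case False
      then show ?thesis unfolding gM_def NVe using gz by simp
    qed
  qed
qed


lemma Phi_Mat:
  assumes sp: "\<sigma> permutes {1..n}"
  shows "fM n \<sigma> \<in> Mat (ExS n \<sigma>) (ExV n \<sigma>)"
    and "gM n \<sigma> \<in> Mat ({1..n} - ExV n \<sigma>) (Suc ` ({1..n} - ExS n \<sigma>))"
proof -
  note pf = perm_facts[OF sp]
  have "bij_betw \<sigma> (ExS n \<sigma>) (ExV n \<sigma>)"
    unfolding ExV_def by (rule inj_on_imp_bij_betw) (use permutes_inj_on[OF sp] in blast)
  then have "bij_betw (fM n \<sigma>) (ExS n \<sigma>) (ExV n \<sigma>)"
    by (rule iffD1[OF bij_betw_cong, rotated]) (simp add: fM_def)
  moreover have "\<forall>j\<in>ExS n \<sigma>. j < fM n \<sigma> j" by (auto simp: fM_def ExS_iff)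
  moreover have "\<forall>x. x \<notin> ExS n \<sigma> \<longrightarrow> fM n \<sigma> x = 0" by (simp add: fM_def)
  ultimately show "fM n \<sigma> \<in> Mat (ExS n \<sigma>) (ExV n \<sigma>)"
    unfolding Mat_def by blast
  have NVe: "{1..n} - ExV n \<sigma> = NV n \<sigma>" unfolding NV_def ..
  have injS: "inj_on (\<lambda>t. Suc (inv \<sigma> t)) (NV n \<sigma>)"
    by (rule inj_onI) (use pf in \<open>metis Suc_inject\<close>)
  have imS: "(\<lambda>t. Suc (inv \<sigma> t)) ` NV n \<sigma> = Suc ` ({1..n} - ExS n \<sigma>)"
  proof (rule set_eqI, rule iffI)
    fix z assume "z \<in> (\<lambda>t. Suc (inv \<sigma> t)) ` NV n \<sigma>"
    then obtain t where t: "t \<in> NV n \<sigma>" "z = Suc (inv \<sigma> t)" by auto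
    have "inv \<sigma> t \<in> {1..n}" using t pf unfolding NV_iff[OF sp] by auto
    moreover have "inv \<sigma> t \<notin> ExS n \<sigma>" using t pf unfolding NV_iff[OF sp] ExS_iff by auto
    ultimately show "z \<in> Suc ` ({1..n} - ExS n \<sigma>)" using t by auto
  next
    fix z assume "z \<in> Suc ` ({1..n} - ExS n \<sigma>)"
    then obtain x where x: "x \<in> {1..n}" "x \<notin> ExS n \<sigma>" "z = Suc x" by auto
    have "\<sigma> x \<in> NV n \<sigma>" using x pf unfolding NV_iff[OF sp] ExS_iff by auto
    moreover have "z = Suc (inv \<sigma> (\<sigma> x))" using x pf by simp
    ultimately show "z \<in> (\<lambda>t. Suc (inv \<sigma> t)) ` NV n \<sigma>" by blast
  qed
  have "bij_betw (\<lambda>t. Suc (inv \<sigma> t)) (NV n \<sigma>) (Suc ` ({1..n} - ExS n \<sigma>))"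
    using injS imS by (rule bij_betw_imageI)
  then have "bij_betw (gM n \<sigma>) (NV n \<sigma>) (Suc ` ({1..n} - ExS n \<sigma>))"
    by (rule iffD1[OF bij_betw_cong, rotated]) (simp add: gM_def)
  moreover have "\<forall>j\<in>NV n \<sigma>. j < gM n \<sigma> j" by (auto simp: gM_def NV_iff[OF sp])
  moreover have "\<forall>x. x \<notin> NV n \<sigma> \<longrightarrow> gM n \<sigma> x = 0" by (simp add: gM_def)
  ultimately show "gM n \<sigma> \<in> Mat ({1..n} - ExV n \<sigma>) (Suc ` ({1..n} - ExS n \<sigma>))"
    unfolding Mat_def NVe by blast
qed

lemma Psi_Phi:
  assumes sp: "\<sigma> permutes {1..n}"
  shows "Psi n (ExS n \<sigma>) (ExV n \<sigma>) (fM n \<sigma>, gM n \<sigma>) = \<sigma>"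
proof
  fix i
  note pf = perm_facts[OF sp]
  show "Psi n (ExS n \<sigma>) (ExV n \<sigma>) (fM n \<sigma>, gM n \<sigma>) i = \<sigma> i"
  proof (cases "i \<in> ExS n \<sigma>")
    case True then show ?thesis unfolding Psi_def fM_def by simp
  next
    case False
    show ?thesis
    proof (cases "i \<in> {1..n}")
      case True
      have inj: "inj_on (gM n \<sigma>) ({1..n} - ExV n \<sigma>)"
        using Phi_Mat(2)[OF sp] unfolding Mat_def bij_betw_def by auto
      have mem: "\<sigma> i \<in> {1..n} - ExV n \<sigma>"
        using True False pf unfolding NV_def[symmetric] NV_iff[OF sp] ExS_iff by auto
      have val: "gM n \<sigma> (\<sigma> i) = Suc i"
        using mem pf unfolding gM_def NV_def by simp
      have "inv_into ({1..n} - ExV n \<sigma>) (gM n \<sigma>) (Suc i) = \<sigma> i"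
        by (rule inv_into_f_eq[OF inj mem val])
      then show ?thesis unfolding Psi_def using True False by simp
    next
      case False2: False
      have "\<sigma> i = i" using permutes_not_in[OF sp False2] .
      moreover have "Psi n (ExS n \<sigma>) (ExV n \<sigma>) (fM n \<sigma>, gM n \<sigma>) i = i"
        unfolding Psi_def using False False2 by (simp only: if_False)
      ultimately show ?thesis by simp
    qed
  qed
qed


lemma fiber_sum:
  fixes p q s y :: "'a::comm_ring_1"
  assumes ObS: "Ob \<subseteq> {1..n}" and CS: "C \<subseteq> {1..n}"
  shows "(\<Sum>\<sigma>\<in>{\<sigma>\<in>Sym n. (ExS n \<sigma>, ExV n \<sigma>) = (Ob, C)}.
            p ^ nest n \<sigma> * q ^ cros n \<sigma> * s ^ cpk_star n \<sigma> * y ^ exc n \<sigma>)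
     = s ^ card {k\<in>{1..n-1}. k \<notin> Ob \<and> Suc k \<in> C} * y ^ card Ob *
       ((\<Sum>f\<in>Mat Ob C. p ^ nestM Ob f * q ^ crosM Ob f) *
        (\<Sum>g\<in>Mat ({1..n} - C) (Suc ` ({1..n} - Ob)).
            p ^ nestM ({1..n} - C) g * q ^ crosM ({1..n} - C) g))"
proof -
  let ?T = "{1..n} - C" and ?S = "Suc ` ({1..n} - Ob)"
  let ?K = "s ^ card {k\<in>{1..n-1}. k \<notin> Ob \<and> Suc k \<in> C} * y ^ card Ob"
  have "?K * ((\<Sum>f\<in>Mat Ob C. p ^ nestM Ob f * q ^ crosM Ob f) *
        (\<Sum>g\<in>Mat ?T ?S. p ^ nestM ?T g * q ^ crosM ?T g))
      = (\<Sum>fg\<in>Mat Ob C \<times> Mat ?T ?S. ?K * ((p ^ nestM Ob (fst fg) * q ^ crosM Ob (fst fg)) *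
            (p ^ nestM ?T (snd fg) * q ^ crosM ?T (snd fg))))"
  proof -
    have e1: "(\<Sum>f\<in>Mat Ob C. p ^ nestM Ob f * q ^ crosM Ob f) *
        (\<Sum>g\<in>Mat ?T ?S. p ^ nestM ?T g * q ^ crosM ?T g)
      = (\<Sum>fg\<in>Mat Ob C \<times> Mat ?T ?S. (p ^ nestM Ob (fst fg) * q ^ crosM Ob (fst fg)) *
            (p ^ nestM ?T (snd fg) * q ^ crosM ?T (snd fg)))"
      unfolding sum_product sum.cartesian_product by (simp add: case_prod_unfold)
    show ?thesis unfolding e1 by (rule sum_distrib_left)
  qed
  also have "\<dots> = (\<Sum>\<sigma>\<in>{\<sigma>\<in>Sym n. (ExS n \<sigma>, ExV n \<sigma>) = (Ob, C)}.
            p ^ nest n \<sigma> * q ^ cros n \<sigma> * s ^ cpk_star n \<sigma> * y ^ exc n \<sigma>)"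
  proof (rule sum.reindex_bij_witness[where i = "\<lambda>\<sigma>. (fM n \<sigma>, gM n \<sigma>)" and j = "Psi n Ob C"])
    fix fg assume fg: "fg \<in> Mat Ob C \<times> Mat ?T ?S"
    obtain f g where fge: "fg = (f, g)" by fastforce
    have f: "f \<in> Mat Ob C" and g: "g \<in> Mat ?T ?S" using fg fge by auto
    note pp = Psi_props[OF ObS CS f g]
    show "(fM n (Psi n Ob C fg), gM n (Psi n Ob C fg)) = fg" using pp fge by simp
    show "Psi n Ob C fg \<in> {\<sigma>\<in>Sym n. (ExS n \<sigma>, ExV n \<sigma>) = (Ob, C)}"
      using pp fge by (simp add: Sym_def)
    have sp: "Psi n Ob C fg permutes {1..n}" using pp fge by simp
    have NVe: "NV n (Psi n Ob C fg) = ?T" unfolding NV_def using pp fge by simp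
    show "p ^ nest n (Psi n Ob C fg) * q ^ cros n (Psi n Ob C fg) * s ^ cpk_star n (Psi n Ob C fg)
          * y ^ exc n (Psi n Ob C fg)
        = ?K * ((p ^ nestM Ob (fst fg) * q ^ crosM Ob (fst fg)) *
            (p ^ nestM ?T (snd fg) * q ^ crosM ?T (snd fg)))"
      unfolding nest_eq[OF sp] cros_eq[OF sp] cpk_eq[OF sp] exc_eq NVe using pp fge
      by (simp add: power_add algebra_simps)
  next
    fix \<sigma> assume "\<sigma> \<in> {\<sigma>\<in>Sym n. (ExS n \<sigma>, ExV n \<sigma>) = (Ob, C)}"
    then have sp: "\<sigma> permutes {1..n}" and e: "ExS n \<sigma> = Ob" "ExV n \<sigma> = C" by (auto simp: Sym_def)
    show "Psi n Ob C (fM n \<sigma>, gM n \<sigma>) = \<sigma>" using Psi_Phi[OF sp] e by simp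
    show "(fM n \<sigma>, gM n \<sigma>) \<in> Mat Ob C \<times> Mat ?T ?S" using Phi_Mat[OF sp] e by simp
  qed
  finally show ?thesis by simp
qed

lemma cnt:
  assumes "A \<subseteq> {1..n}" "k \<le> n"
  shows "card {x\<in>{1..n} - A. x \<le> k} = k - card {x\<in>A. x \<le> k}" and "card {x\<in>A. x \<le> k} \<le> k"
proof -
  have sub: "{x\<in>A. x \<le> k} \<subseteq> {1..k}" using assms by auto
  have "{x\<in>{1..n} - A. x \<le> k} = {1..k} - {x\<in>A. x \<le> k}" using assms by auto
  then show "card {x\<in>{1..n} - A. x \<le> k} = k - card {x\<in>A. x \<le> k}"
    using card_Diff_subset[OF finite_subset[OF sub] sub] by simp
  show "card {x\<in>A. x \<le> k} \<le> k" using card_mono[OF _ sub] by simp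
qed

lemma nat_int_diff: "nat (int a - int b) = a - b"
  by (cases "b \<le> a") auto

lemma prodA:
  fixes p q :: "'a::comm_ring_1"
  assumes P: "(Ob, C) \<in> PP (n - 1)"
  shows "(\<Prod>v\<in>C. qint p q (hM Ob C v)) = (\<Prod>k\<in>{k\<in>{1..n-1}. Suc k \<in> C}. qi p q (ht Ob C k + 1))"
proof -
  have CS: "C \<subseteq> {2..Suc (n-1)}" using P unfolding PP_def by auto
  have Ce: "C = Suc ` {k\<in>{1..n-1}. Suc k \<in> C}"
  proof (rule set_eqI, rule iffI)
    fix c assume c: "c \<in> C"
    then have "c \<in> {2..Suc (n-1)}" using CS by blast
    then have "c = Suc (c - 1)" "c - 1 \<in> {1..n-1}" by auto
    then show "c \<in> Suc ` {k\<in>{1..n-1}. Suc k \<in> C}" using c by (metis (mono_tags, lifting) image_eqI mem_Collect_eq)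
  qed auto
  have "(\<Prod>v\<in>C. qint p q (hM Ob C v)) = (\<Prod>k\<in>{k\<in>{1..n-1}. Suc k \<in> C}. qint p q (hM Ob C (Suc k)))"
    by (subst Ce, subst prod.reindex) auto
  also have "\<dots> = (\<Prod>k\<in>{k\<in>{1..n-1}. Suc k \<in> C}. qi p q (ht Ob C k + 1))"
  proof (rule prod.cong[OF refl])
    fix k assume k: "k \<in> {k\<in>{1..n-1}. Suc k \<in> C}"
    have fC: "finite C" using CS finite_subset by blast
    have e1: "{c\<in>C. c \<le> Suc k} = insert (Suc k) {c\<in>C. c < Suc k}" using k by auto
    have e2: "card {c\<in>C. c \<le> Suc k} = Suc (card {c\<in>C. c < Suc k})"
      unfolding e1 using fC by simp
    have e3: "{j\<in>Ob. j < Suc k} = {x\<in>Ob. x \<le> k}" by auto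
    show "qint p q (hM Ob C (Suc k)) = qi p q (ht Ob C k + 1)"
      unfolding hM_def ht_def qi_def e2 e3 by (simp add: nat_int_diff)
  qed
  finally show ?thesis .
qed

lemma arith_h: "b \<le> (j::nat) \<Longrightarrow> a \<le> j - 1 \<Longrightarrow> 1 \<le> j \<Longrightarrow> (j - b) - (j - 1 - a) = nat (int a - int b + 1)"
  by (cases "b \<le> a") (auto simp: nat_diff_distrib)

lemma hB:
  assumes P: "(Ob, C) \<in> PP (n - 1)" and n1: "n \<ge> 1" and j: "j \<in> {1..n}"
  shows "hM ({1..n} - C) (Suc ` ({1..n} - Ob)) (Suc j) = nat (ht Ob C (j - 1) + 1)"
proof -
  have O1: "Ob \<subseteq> {1..n-1}" and C1: "C \<subseteq> {2..Suc (n-1)}" using P unfolding PP_def by auto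
  have ObS: "Ob \<subseteq> {1..n}" by (rule subset_trans[OF O1]) auto
  have CS: "C \<subseteq> {1..n}" by (rule subset_trans[OF C1]) (use n1 in auto)
  have c1: "card {t\<in>{1..n} - C. t < Suc j} = j - card {c\<in>C. c \<le> j}"
    using cnt(1)[OF CS, of j] j by (simp add: less_Suc_eq_le)
  have c1b: "card {c\<in>C. c \<le> j} \<le> j" using cnt(2)[OF CS, of j] j by simp
  have s1: "{v\<in>Suc ` ({1..n} - Ob). v < Suc j} = Suc ` {x\<in>{1..n} - Ob. x \<le> j - 1}"
    using j by auto
  have c2: "card {v\<in>Suc ` ({1..n} - Ob). v < Suc j} = (j - 1) - card {x\<in>Ob. x \<le> j - 1}"
  proof -
    have jn: "j - 1 \<le> n" using j by auto
    have "card (Suc ` {x\<in>{1..n} - Ob. x \<le> j - 1}) = card {x\<in>{1..n} - Ob. x \<le> j - 1}"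
      by (rule card_image) simp
    then show ?thesis unfolding s1 using cnt(1)[OF ObS jn] by simp
  qed
  have c2b: "card {x\<in>Ob. x \<le> j - 1} \<le> j - 1" using cnt(2)[OF ObS, of "j-1"] j by auto
  have sj: "Suc (j - 1) = j" using j by simp
  have "(j - card {c\<in>C. c \<le> j}) - ((j - 1) - card {x\<in>Ob. x \<le> j - 1})
     = nat (int (card {x\<in>Ob. x \<le> j - 1}) - int (card {c\<in>C. c \<le> j}) + 1)"
    by (rule arith_h) (use c1b c2b j in auto)
  then show ?thesis unfolding hM_def c1 c2 ht_def sj by simp
qed

lemma prodB:
  fixes p q :: "'a::comm_ring_1"
  assumes P: "(Ob, C) \<in> PP (n - 1)" and n1: "n \<ge> 1" and cc: "card Ob = card C"
  shows "(\<Prod>v\<in>Suc ` ({1..n} - Ob). qint p q (hM ({1..n} - C) (Suc ` ({1..n} - Ob)) v))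
       = (\<Prod>k\<in>{k\<in>{1..n-1}. k \<notin> Ob}. qi p q (ht Ob C (k - 1) + 1))"
proof -
  have ObS: "Ob \<subseteq> {1..n-1}" using P unfolding PP_def by auto
  have "(\<Prod>v\<in>Suc ` ({1..n} - Ob). qint p q (hM ({1..n} - C) (Suc ` ({1..n} - Ob)) v))
      = (\<Prod>j\<in>{1..n} - Ob. qi p q (ht Ob C (j - 1) + 1))"
  proof (subst prod.reindex)
    show "inj_on Suc ({1..n} - Ob)" by simp
    show "prod ((\<lambda>v. qint p q (hM ({1..n} - C) (Suc ` ({1..n} - Ob)) v)) \<circ> Suc) ({1..n} - Ob)
        = (\<Prod>j\<in>{1..n} - Ob. qi p q (ht Ob C (j - 1) + 1))"
    proof (rule prod.cong[OF refl])
      fix j assume j: "j \<in> {1..n} - Ob"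
      then have j': "j \<in> {1..n}" by blast
      show "((\<lambda>v. qint p q (hM ({1..n} - C) (Suc ` ({1..n} - Ob)) v)) \<circ> Suc) j = qi p q (ht Ob C (j - 1) + 1)"
        unfolding comp_def qi_def hB[OF P n1 j'] ..
    qed
  qed
  also have "(\<Prod>j\<in>{1..n} - Ob. qi p q (ht Ob C (j - 1) + 1))
      = qi p q (ht Ob C (n - 1) + 1) * (\<Prod>k\<in>{k\<in>{1..n-1}. k \<notin> Ob}. qi p q (ht Ob C (k - 1) + 1))"
  proof -
    have se: "{1..n} - Ob = insert n {k\<in>{1..n-1}. k \<notin> Ob}" using ObS n1 by auto
    show ?thesis unfolding se by (rule prod.insert) auto
  qed
  also have "qi p q (ht Ob C (n - 1) + 1) = 1"
    using ht_PP[OF P] cc by (simp add: qi_def qint_def)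
  finally show ?thesis by simp
qed


lemma G_SS:
  fixes p q s y :: "'a::comm_ring_1"
  assumes n1: "n \<ge> 1"
  shows "(\<Sum>\<sigma>\<in>Sym n. p ^ nest n \<sigma> * q ^ cros n \<sigma> * s ^ cpk_star n \<sigma> * y ^ exc n \<sigma>)
       = SS p q s y (n - 1) 0"
proof -
  let ?G = "\<lambda>\<sigma>. p ^ nest n \<sigma> * q ^ cros n \<sigma> * s ^ cpk_star n \<sigma> * y ^ exc n \<sigma>"
  have fin: "finite (Sym n)" unfolding Sym_def by (rule finite_permutations) simp
  have img: "(\<lambda>\<sigma>. (ExS n \<sigma>, ExV n \<sigma>)) ` Sym n \<subseteq> PP (n - 1)"
  proof
    fix z assume "z \<in> (\<lambda>\<sigma>. (ExS n \<sigma>, ExV n \<sigma>)) ` Sym n"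
    then obtain \<sigma> where sp: "\<sigma> permutes {1..n}" and z: "z = (ExS n \<sigma>, ExV n \<sigma>)"
      unfolding Sym_def by auto
    note pf = perm_facts[OF sp]
    have "ExS n \<sigma> \<subseteq> {1..n-1}"
    proof
      fix i assume "i \<in> ExS n \<sigma>"
      then have "i \<in> {1..n}" "i < \<sigma> i" "\<sigma> i \<in> {1..n}" using pf unfolding ExS_iff by auto
      then show "i \<in> {1..n-1}" by auto
    qed
    moreover have "ExV n \<sigma> \<subseteq> {2..Suc (n-1)}"
    proof
      fix v assume "v \<in> ExV n \<sigma>"
      then obtain i where "i \<in> ExS n \<sigma>" "v = \<sigma> i" unfolding ExV_def by auto
      then have "i \<in> {1..n}" "i < v" "v \<in> {1..n}" using pf unfolding ExS_iff by auto
      then show "v \<in> {2..Suc (n-1)}" by auto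
    qed
    ultimately show "z \<in> PP (n - 1)" unfolding z PP_def by auto
  qed
  have "(\<Sum>\<sigma>\<in>Sym n. ?G \<sigma>) = (\<Sum>z\<in>PP (n - 1). \<Sum>\<sigma>\<in>{\<sigma>\<in>Sym n. (ExS n \<sigma>, ExV n \<sigma>) = z}. ?G \<sigma>)"
    by (rule sum.group[symmetric, OF fin PP_finite img])
  also have "\<dots> = (\<Sum>z\<in>PP (n - 1). (\<lambda>(Ob, C). if ht Ob C (n - 1) = 0 then wt p q s y (n - 1) Ob C else 0) z)"
  proof (rule sum.cong[OF refl])
    fix z assume zP: "z \<in> PP (n - 1)"
    obtain Ob C where ze: "z = (Ob, C)" by fastforce
    have P: "(Ob, C) \<in> PP (n - 1)" using zP ze by simp
    have O1: "Ob \<subseteq> {1..n-1}" and C1: "C \<subseteq> {2..Suc (n-1)}" using P unfolding PP_def by auto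
    have ObS: "Ob \<subseteq> {1..n}" by (rule subset_trans[OF O1]) auto
    have CS: "C \<subseteq> {1..n}" by (rule subset_trans[OF C1]) (use n1 in auto)
    have fO: "finite Ob" and fC: "finite C" using ObS CS finite_subset by auto
    show "(\<Sum>\<sigma>\<in>{\<sigma>\<in>Sym n. (ExS n \<sigma>, ExV n \<sigma>) = z}. ?G \<sigma>)
        = (\<lambda>(Ob, C). if ht Ob C (n - 1) = 0 then wt p q s y (n - 1) Ob C else 0) z"
    proof (cases "card Ob = card C")
      case True
      have h0: "ht Ob C (n - 1) = 0" using ht_PP[OF P] True by simp
      have cT: "card ({1..n} - C) = n - card C" using card_Diff_subset[OF fC CS] by simp
      have cS: "card (Suc ` ({1..n} - Ob)) = n - card Ob"
        using card_Diff_subset[OF fO ObS] by (simp add: card_image)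
      have m1: "(\<Sum>f\<in>Mat Ob C. p ^ nestM Ob f * q ^ crosM Ob f) = (\<Prod>v\<in>C. qint p q (hM Ob C v))"
        by (rule Mat_sum[OF fO fC True])
      have m2: "(\<Sum>g\<in>Mat ({1..n} - C) (Suc ` ({1..n} - Ob)).
            p ^ nestM ({1..n} - C) g * q ^ crosM ({1..n} - C) g)
          = (\<Prod>v\<in>Suc ` ({1..n} - Ob). qint p q (hM ({1..n} - C) (Suc ` ({1..n} - Ob)) v))"
        by (rule Mat_sum) (use cT cS True in auto)
      show ?thesis unfolding ze fiber_sum[OF ObS CS] m1 m2 prodA[OF P] prodB[OF P n1 True]
        using h0 by (simp add: wt_def algebra_simps)
    next
      case False
      have "{\<sigma>\<in>Sym n. (ExS n \<sigma>, ExV n \<sigma>) = z} = {}"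
      proof (rule ccontr)
        assume "{\<sigma>\<in>Sym n. (ExS n \<sigma>, ExV n \<sigma>) = z} \<noteq> {}"
        then obtain \<sigma> where sp: "\<sigma> permutes {1..n}" and e: "ExS n \<sigma> = Ob" "ExV n \<sigma> = C"
          unfolding Sym_def ze by auto
        have "card (ExV n \<sigma>) = card (ExS n \<sigma>)" unfolding ExV_def
          by (rule card_image) (use permutes_inj_on[OF sp] in blast)
        then show False using False e by simp
      qed
      then have e0: "(\<Sum>\<sigma>\<in>{\<sigma>\<in>Sym n. (ExS n \<sigma>, ExV n \<sigma>) = z}. ?G \<sigma>) = 0"
        by (simp only: sum.empty)
      have "ht Ob C (n - 1) \<noteq> 0" using ht_PP[OF P] False by simp
      then have r0: "(\<lambda>(Ob, C). if ht Ob C (n - 1) = 0 then wt p q s y (n - 1) Ob C else 0) z = 0"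
        unfolding ze by simp
      show ?thesis using e0 r0 by (simp only:)
    qed
  qed
  also have "\<dots> = SS p q s y (n - 1) 0" unfolding SS_def ..
  finally show ?thesis .
qed

theorem theorem3p1:
  fixes n :: nat and p q t x :: "'a::field"
  assumes "n \<ge> 1"
    and "1 + x \<noteq> 0" and "x + t \<noteq> 0" and "1 + x * t \<noteq> 0"
  shows "A_poly n p q t =
    ((1 + x * t) / (1 + x)) ^ (n - 1) *
    P_nest_cros_cpk_exc n p q ((1 + x)\<^sup>2 * t / ((x + t) * (1 + x * t))) ((x + t) / (1 + x * t))"
proof -
  define s where "s = (1 + x)\<^sup>2 * t / ((x + t) * (1 + x * t))"
  define y where "y = (x + t) / (1 + x * t)"
  define r where "r = (1 + x) / (1 + x * t)"
  have nz1: "(x + t) * (1 + x * t) * (1 + x * t) \<noteq> 0" using assms by simp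
  have nz2: "(1 + x * t) * (1 + x * t) \<noteq> 0" using assms by simp
  have h1: "s * y = r^2 * t"
  proof -
    have "s * y = ((1 + x)\<^sup>2 * t * (x + t)) / ((x + t) * (1 + x * t) * (1 + x * t))"
      unfolding s_def y_def by (simp add: mult.assoc)
    also have "r^2 * t = ((1 + x)\<^sup>2 * t) / ((1 + x * t) * (1 + x * t))"
      unfolding r_def by (simp add: power2_eq_square)
    moreover have "((1 + x)\<^sup>2 * t * (x + t)) / ((x + t) * (1 + x * t) * (1 + x * t))
        = ((1 + x)\<^sup>2 * t) / ((1 + x * t) * (1 + x * t))"
      using frac_eq_eq[OF nz1 nz2] by (simp add: algebra_simps)
    ultimately show ?thesis by simp
  qed
  have h2: "1 + y = r * (1 + t)" unfolding y_def r_def using assms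
    by (simp add: field_simps)
  have A: "A_poly n p q t = EE p q 1 t (n - 1) 0"
  proof -
    have "A_poly n p q t = (\<Sum>\<sigma>\<in>Sym n. p ^ nest n \<sigma> * q ^ cros n \<sigma> * 1 ^ cpk_star n \<sigma> * t ^ exc n \<sigma>)"
      unfolding A_poly_def by simp
    also have "\<dots> = SS p q 1 t (n - 1) 0" by (rule G_SS[OF assms(1)])
    finally show ?thesis by (simp add: SS_EE)
  qed
  have P: "P_nest_cros_cpk_exc n p q s y = EE p q s y (n - 1) 0"
    unfolding P_nest_cros_cpk_exc_def G_SS[OF assms(1)] by (simp add: SS_EE)
  have sc: "EE p q s y (n - 1) 0 = r ^ (n - 1) * EE p q 1 t (n - 1) 0"
    using EE_scale[OF h1 h2, of 0 p q "n - 1"] by simp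
  have rr: "((1 + x * t) / (1 + x)) * r = 1" unfolding r_def using assms by simp
  have "((1 + x * t) / (1 + x)) ^ (n - 1) * P_nest_cros_cpk_exc n p q s y
      = (((1 + x * t) / (1 + x)) * r) ^ (n - 1) * EE p q 1 t (n - 1) 0"
    unfolding P sc by (simp only: power_mult_distrib mult.assoc)
  also have "\<dots> = A_poly n p q t" unfolding rr A by simp
  finally show ?thesis unfolding s_def y_def by simp
qed

end
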